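(* Let $N\ge 4$ be even and let $P_1,\dots,P_N$ be an $N$-periodic billiard trajectory in $E$. For $j=1,2$ let $\bar Q_{j,i}$ be the foot of the perpendicular from $f_j$ to the line $P_iP_{i+1}$, and let $\bar A_j$ be the signed area of the polygon $\bar Q_{j,1},\dots,\bar Q_{j,N}$. Then $\bar A_1=\bar A_2$, i.e. $\bar A_1/\bar A_2=1$.
   Context: Let $E$ be the ellipse $x^2/a^2+y^2/b^2=1$ with $a>b>0$, center $O=(0,0)$ and foci $f_1=(-\sqrt{a^2-b^2},0)$, $f_2=(\sqrt{a^2-b^2},0)$. An $N$-periodic billiard trajectory is a convex polygon with vertices $P_1,\dots,P_N\in E$ (indices mod $N$), listed counterclockwise and winding once around $O$, with $P_i\neq P_{i+1}$, such that at every vertex $P_i$ the normal line to $E$ at $P_i$ bisects the angle $\angle P_{i-1}P_iP_{i+1}$, and all of whose sides are tangent to a common ellipse confocal with $E$. The signed area of a polygon with vertices $W_i=(x_i,y_i)$, $i=1,\dots,N$ (indices mod $N$), is $S=\tfrac12\sum_{i=1}^N (x_iy_{i+1}-x_{i+1}y_i)$. *)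

theory Defs
  imports "HOL-Analysis.Analysis"
begin

type_synonym pt = "real \<times> real"

definition cross :: "pt \<Rightarrow> pt \<Rightarrow> real" where
  "cross u v = fst u * snd v - snd u * fst v"

definition pdot :: "pt \<Rightarrow> pt \<Rightarrow> real" where
  "pdot u v = fst u * fst v + snd u * snd v"

definition pnorm :: "pt \<Rightarrow> real" where
  "pnorm u = sqrt (pdot u u)"

definition on_ellipse :: "real \<Rightarrow> real \<Rightarrow> pt \<Rightarrow> bool" where
  "on_ellipse a b X \<longleftrightarrow> (fst X)\<^sup>2 / a\<^sup>2 + (snd X)\<^sup>2 / b\<^sup>2 = 1"

definition focus1 :: "real \<Rightarrow> real \<Rightarrow> pt" where
  "focus1 a b = (- sqrt (a\<^sup>2 - b\<^sup>2), 0)"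
definition focus2 :: "real \<Rightarrow> real \<Rightarrow> pt" where
  "focus2 a b = (sqrt (a\<^sup>2 - b\<^sup>2), 0)"

definition ell_normal :: "real \<Rightarrow> real \<Rightarrow> pt \<Rightarrow> pt" where
  "ell_normal a b X = (fst X / a\<^sup>2, snd X / b\<^sup>2)"

definition line_tangent_to_ellipse :: "pt \<Rightarrow> pt \<Rightarrow> real \<Rightarrow> real \<Rightarrow> bool" where
  "line_tangent_to_ellipse P Q A B \<longleftrightarrow>
     (\<exists>!X. on_ellipse A B X \<and> (\<exists>t::real. X = P + t *\<^sub>R (Q - P)))"

definition confocal_ellipse :: "real \<Rightarrow> real \<Rightarrow> real \<Rightarrow> real \<Rightarrow> bool" where
  "confocal_ellipse a b A B \<longleftrightarrow> A > B \<and> B > 0 \<and> A\<^sup>2 - B\<^sup>2 = a\<^sup>2 - b\<^sup>2"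

definition billiard_traj :: "real \<Rightarrow> real \<Rightarrow> nat \<Rightarrow> (nat \<Rightarrow> pt) \<Rightarrow> bool" where
  "billiard_traj a b N P \<longleftrightarrow>
     N \<ge> 3 \<and>
     (\<forall>i<N. on_ellipse a b (P i)) \<and>
     (\<forall>i<N. P i \<noteq> P (Suc i mod N)) \<and>
     \<comment> \<open>convex polygon, listed counterclockwise: every other vertex strictly left of each edge\<close>
     (\<forall>i<N. \<forall>j<N. j \<noteq> i \<and> j \<noteq> Suc i mod N \<longrightarrow>
         cross (P (Suc i mod N) - P i) (P j - P i) > 0) \<and>
     \<comment> \<open>winds once around O: O strictly left of each edge\<close>
     (\<forall>i<N. cross (P (Suc i mod N) - P i) (0 - P i) > 0) \<and>
     \<comment> \<open>reflection law: the normal at P i bisects the angle P(i-1) P i P(i+1)\<close>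
     (\<forall>i<N. let u = P ((i + N - 1) mod N) - P i; v = P (Suc i mod N) - P i in
         cross (ell_normal a b (P i)) ((1 / pnorm u) *\<^sub>R u + (1 / pnorm v) *\<^sub>R v) = 0) \<and>
     \<comment> \<open>all sides tangent to a common confocal ellipse\<close>
     (\<exists>A B. confocal_ellipse a b A B \<and>
         (\<forall>i<N. line_tangent_to_ellipse (P i) (P (Suc i mod N)) A B))"

definition foot :: "pt \<Rightarrow> pt \<Rightarrow> pt \<Rightarrow> pt" where
  "foot F P Q = P + (pdot (F - P) (Q - P) / pdot (Q - P) (Q - P)) *\<^sub>R (Q - P)"

definition signed_area :: "nat \<Rightarrow> (nat \<Rightarrow> pt) \<Rightarrow> real" where
  "signed_area N W = (1/2) * (\<Sum>i<N. fst (W i) * snd (W (Suc i mod N))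
                                     - fst (W (Suc i mod N)) * snd (W i))"

end

theory Submission imports Defs begin

definition QC :: "real \<Rightarrow> real \<Rightarrow> pt \<Rightarrow> real" where
  "QC A B X = (fst X)^2/A^2 + (snd X)^2/B^2"

lemma on_ellipse_QC: "on_ellipse A B X \<longleftrightarrow> QC A B X = 1"
  by (simp add: on_ellipse_def QC_def)

lemma QC_line: "QC A B (W + r *\<^sub>R d) = QC A B W
   + 2*r*(fst W * fst d/A^2 + snd W * snd d/B^2) + r^2*((fst d)^2/A^2 + (snd d)^2/B^2)"
  by (simp add: QC_def power2_eq_square divide_inverse algebra_simps)

lemma two_points_not_tangent:
  fixes P Q W :: pt and A B w :: real
  assumes "P \<noteq> Q" "A > 0" "B > 0" "QC A B W < 1" "W = P + w *\<^sub>R (Q - P)"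
  shows "\<not> line_tangent_to_ellipse P Q A B"
proof
  assume tg: "line_tangent_to_ellipse P Q A B"
  define d where "d = Q - P"
  define \<alpha> where "\<alpha> = (fst d)^2/A^2 + (snd d)^2/B^2"
  define \<beta> where "\<beta> = fst W * fst d/A^2 + snd W * snd d/B^2"
  define \<gamma> where "\<gamma> = QC A B W"
  have dne: "d \<noteq> 0" using assms(1) by (simp add: d_def)
  have "fst d \<noteq> 0 \<or> snd d \<noteq> 0" using dne by (simp add: prod_eq_iff)
  hence apos: "\<alpha> > 0" unfolding \<alpha>_def using assms(2,3)
    by (auto intro: add_pos_nonneg add_nonneg_pos)
  define S where "S = sqrt (\<beta>^2 + \<alpha>*(1-\<gamma>))"
  have rad: "\<beta>^2 + \<alpha>*(1-\<gamma>) > 0" using apos assms(4) \<gamma>_def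
    by (simp add: add_nonneg_pos)
  have Spos: "S > 0" using rad by (simp add: S_def)
  have S2: "S^2 = \<beta>^2 + \<alpha>*(1-\<gamma>)" using rad by (simp add: S_def)
  define r1 where "r1 = (-\<beta> + S)/\<alpha>"
  define r2 where "r2 = (-\<beta> - S)/\<alpha>"
  have e1: "\<gamma> + 2*r1*\<beta> + r1^2*\<alpha> = 1"
    using apos S2 unfolding r1_def by (simp add: field_simps power2_eq_square) algebra
  have e2: "\<gamma> + 2*r2*\<beta> + r2^2*\<alpha> = 1"
    using apos S2 unfolding r2_def by (simp add: field_simps power2_eq_square) algebra
  define X1 where "X1 = W + r1 *\<^sub>R d"
  define X2 where "X2 = W + r2 *\<^sub>R d"
  have o1: "on_ellipse A B X1" unfolding on_ellipse_QC X1_def QC_line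
    using e1 \<alpha>_def \<beta>_def \<gamma>_def by simp
  have o2: "on_ellipse A B X2" unfolding on_ellipse_QC X2_def QC_line
    using e2 \<alpha>_def \<beta>_def \<gamma>_def by simp
  have l1: "X1 = P + (w + r1) *\<^sub>R (Q - P)"
    by (simp add: X1_def assms(5) d_def scaleR_add_left)
  have l2: "X2 = P + (w + r2) *\<^sub>R (Q - P)"
    by (simp add: X2_def assms(5) d_def scaleR_add_left)
  have rne: "r1 \<noteq> r2" using Spos apos unfolding r1_def r2_def by (auto simp: field_simps)
  have "X1 \<noteq> X2"
  proof
    assume "X1 = X2"
    hence "(r1 - r2) *\<^sub>R d = 0" by (simp add: X1_def X2_def scaleR_diff_left)
    thus False using rne dne by simp
  qed
  thus False using tg o1 o2 l1 l2 unfolding line_tangent_to_ellipse_def by blast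
qed


definition valid :: "real\<Rightarrow>real\<Rightarrow>real\<Rightarrow>real\<Rightarrow>pt\<Rightarrow>pt\<Rightarrow>bool" where
 "valid a b A B X Y \<longleftrightarrow> on_ellipse a b X \<and> on_ellipse a b Y \<and> X \<noteq> Y \<and>
    line_tangent_to_ellipse X Y A B \<and> cross (Y - X) (0 - X) > 0"

lemma cross_zero_line:
  assumes "cross d v = 0" "d \<noteq> 0"
  shows "v = (pdot v d / pdot d d) *\<^sub>R d"
proof -
  obtain d1 d2 where d: "d = (d1,d2)" by (cases d)
  obtain u1 u2 where v: "v = (u1,u2)" by (cases v)
  have nz: "d1^2 + d2^2 \<noteq> 0" using assms(2) d by (auto simp: zero_prod_def)
  have c: "d1*u2 = d2*u1" using assms(1) by (simp add: cross_def d v)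
  have h1: "u1*(d1^2+d2^2) - (u1*d1+u2*d2)*d1 = d2*(d2*u1 - d1*u2)" by (simp add: algebra_simps power2_eq_square)
  have h2: "u2*(d1^2+d2^2) - (u1*d1+u2*d2)*d2 = d1*(d1*u2 - d2*u1)" by (simp add: algebra_simps power2_eq_square)
  have "u1 = (u1*d1+u2*d2)/(d1^2+d2^2) * d1"
    using nz c h1 by (simp add: eq_divide_eq)
  moreover have "u2 = (u1*d1+u2*d2)/(d1^2+d2^2) * d2"
    using nz c h2 by (simp add: eq_divide_eq)
  ultimately show ?thesis by (simp add: d v pdot_def power2_eq_square)
qed

lemma caustic_left:
  assumes v: "valid a b A B X Y" and AB: "A > 0" "B > 0" and Z: "on_ellipse A B Z"
  shows "cross (Y - X) (Z - X) \<ge> 0"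
proof (rule ccontr)
  assume neg: "\<not> ?thesis"
  define d where "d = Y - X"
  have dne: "d \<noteq> 0" using v by (auto simp: valid_def d_def)
  have cX: "cross d X < 0" using v unfolding valid_def d_def by (simp add: cross_def algebra_simps)
  have cZ: "cross d Z < cross d X" using neg unfolding d_def by (simp add: cross_def algebra_simps)
  define l where "l = cross d X / cross d Z"
  have l0: "l > 0" using cX cZ by (simp add: l_def divide_neg_neg)
  have l1: "l < 1" using cX cZ by (simp add: l_def divide_less_eq)
  define W where "W = l *\<^sub>R Z"
  have "cross d (W - X) = l * cross d Z - cross d X" by (simp add: W_def cross_def algebra_simps)
  also have "\<dots> = 0" using cX cZ by (simp add: l_def)
  finally have "cross d (W - X) = 0" .
  hence W: "W - X = (pdot (W - X) d / pdot d d) *\<^sub>R d" using cross_zero_line dne by blast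
  have "QC A B W = l^2 * QC A B Z" by (simp add: W_def QC_def power_mult_distrib field_simps)
  also have "\<dots> = l^2" using Z by (simp add: on_ellipse_QC)
  also have "\<dots> < 1" using l0 l1 by (simp add: power_less_one_iff)
  finally have QW: "QC A B W < 1" .
  have Weq: "W = X + (pdot (W - X) d / pdot d d) *\<^sub>R (Y - X)"
    using W unfolding d_def by (metis add.commute diff_add_cancel)
  have "X \<noteq> Y" using v by (simp add: valid_def)
  hence "\<not> line_tangent_to_ellipse X Y A B"
    using two_points_not_tangent[OF _ AB QW Weq] by blast
  thus False using v by (simp add: valid_def)
qed

lemma on_line_E:
  assumes "on_ellipse a b X" "on_ellipse a b Y" "X \<noteq> Y" "a > 0" "b > 0" "on_ellipse a b Z"
    "cross (Y - X) (Z - X) = 0"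
  shows "Z = X \<or> Z = Y"
proof -
  define d where "d = Y - X"
  have dne: "d \<noteq> 0" using assms by (simp add: d_def)
  define r where "r = pdot (Z - X) d / pdot d d"
  have Zr: "Z = X + r *\<^sub>R d" using cross_zero_line[of d "Z - X"] assms(7) dne
    unfolding r_def d_def by (metis add.commute diff_add_cancel)
  define \<alpha> where "\<alpha> = (fst d)^2/a^2 + (snd d)^2/b^2"
  define \<beta> where "\<beta> = fst X * fst d/a^2 + snd X * snd d/b^2"
  have "fst d \<noteq> 0 \<or> snd d \<noteq> 0" using dne by (simp add: prod_eq_iff)
  hence apos: "\<alpha> > 0" unfolding \<alpha>_def using assms(4,5)
    by (auto intro: add_pos_nonneg add_nonneg_pos)
  have "QC a b (X + 1 *\<^sub>R d) = 1" using assms(2) by (simp add: d_def on_ellipse_QC)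
  hence e1: "2*\<beta> + \<alpha> = 0" using assms(1) unfolding QC_line on_ellipse_QC \<alpha>_def \<beta>_def by simp
  have "QC a b (X + r *\<^sub>R d) = 1" using assms(6) Zr by (simp add: on_ellipse_QC)
  hence e2: "2*r*\<beta> + r^2*\<alpha> = 0" using assms(1) unfolding QC_line on_ellipse_QC \<alpha>_def \<beta>_def by simp
  have "\<alpha> * (r * (r - 1)) = (2*r*\<beta> + r^2*\<alpha>) - r*(2*\<beta>+\<alpha>)" by (simp add: algebra_simps power2_eq_square)
  hence "\<alpha> * (r * (r - 1)) = 0" using e1 e2 by simp
  hence "r = 0 \<or> r = 1" using apos by auto
  thus ?thesis using Zr by (auto simp: d_def)
qed

lemma inside_E:
  assumes "0 < A" "A < a" "0 < B" "B < b" "on_ellipse A B Z"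
  shows "QC a b Z < 1"
proof -
  have "Z \<noteq> 0" using assms(5) by (auto simp: on_ellipse_def)
  hence "fst Z \<noteq> 0 \<or> snd Z \<noteq> 0" by (simp add: prod_eq_iff)
  moreover have "(fst Z)^2/a^2 \<le> (fst Z)^2/A^2" using assms
    by (intro divide_left_mono) (auto intro: power_strict_mono)
  moreover have "(snd Z)^2/b^2 \<le> (snd Z)^2/B^2" using assms
    by (intro divide_left_mono) (auto intro: power_strict_mono)
  moreover have "fst Z \<noteq> 0 \<Longrightarrow> (fst Z)^2/a^2 < (fst Z)^2/A^2" using assms
    by (intro divide_strict_left_mono) (auto intro: power_strict_mono)
  moreover have "snd Z \<noteq> 0 \<Longrightarrow> (snd Z)^2/b^2 < (snd Z)^2/B^2" using assms
    by (intro divide_strict_left_mono) (auto intro: power_strict_mono)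
  ultimately have "QC a b Z < QC A B Z" unfolding QC_def by linarith
  thus ?thesis using assms(5) by (simp add: on_ellipse_QC)
qed


lemma no_nest:
  assumes pos: "0 < A" "A < a" "0 < B" "B < b"
  and v: "valid a b A B X Y" and v': "valid a b A B X' Y'"
  and c1: "cross (Y - X) (X' - X) \<le> 0" and c2: "cross (Y - X) (Y' - X) \<le> 0"
  shows "X' = X \<and> Y' = Y"
proof -
  have ab: "a > 0" "b > 0" using pos by auto
  obtain T t0 where T: "on_ellipse A B T" "T = X' + t0 *\<^sub>R (Y' - X')"
    using v' unfolding valid_def line_tangent_to_ellipse_def by blast
  define d where "d = Y' - X'"
  define \<alpha> where "\<alpha> = (fst d)^2/a^2 + (snd d)^2/b^2"
  define \<beta> where "\<beta> = fst X' * fst d/a^2 + snd X' * snd d/b^2"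
  have dne: "d \<noteq> 0" using v' by (auto simp: d_def valid_def)
  have "fst d \<noteq> 0 \<or> snd d \<noteq> 0" using dne by (simp add: prod_eq_iff)
  hence apos: "\<alpha> > 0" unfolding \<alpha>_def using ab
    by (auto intro: add_pos_nonneg add_nonneg_pos)
  have "QC a b (X' + 1 *\<^sub>R d) = 1" using v' by (simp add: d_def on_ellipse_QC valid_def)
  hence e1: "2*\<beta> + \<alpha> = 0" using v' unfolding QC_line on_ellipse_QC \<alpha>_def \<beta>_def valid_def by simp
  have "QC a b T < 1" using inside_E[OF pos T(1)] .
  moreover have "QC a b T = QC a b X' + 2*t0*\<beta> + t0^2*\<alpha>"
    unfolding T(2) d_def[symmetric] QC_line \<alpha>_def \<beta>_def by simp
  ultimately have "QC a b X' + 2*t0*\<beta> + t0^2*\<alpha> < 1" by simp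
  hence "2*t0*\<beta> + t0^2*\<alpha> < 0" using v' by (simp add: valid_def on_ellipse_QC)
  moreover have "\<alpha> * (t0 * (t0 - 1)) = (2*t0*\<beta> + t0^2*\<alpha>) - t0*(2*\<beta>+\<alpha>)" by (simp add: algebra_simps power2_eq_square)
  ultimately have "\<alpha> * (t0 * (t0 - 1)) < 0" using e1 by simp
  hence "t0 * (t0 - 1) < 0" using apos by (simp add: mult_less_0_iff)
  hence t0: "0 < t0" "t0 < 1" by (auto simp: mult_less_0_iff)
  have ceq: "cross (Y - X) (T - X) = (1 - t0) * cross (Y-X) (X'-X) + t0 * cross (Y-X) (Y'-X)"
    by (simp add: T(2) cross_def algebra_simps)
  have ge: "cross (Y - X) (T - X) \<ge> 0" using caustic_left[OF v pos(1,3) T(1)] .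
  have m1: "(1 - t0) * cross (Y-X) (X'-X) \<le> 0" using t0 c1 by (simp add: mult_nonneg_nonpos)
  have m2: "t0 * cross (Y-X) (Y'-X) \<le> 0" using t0 c2 by (simp add: mult_nonneg_nonpos)
  have "(1 - t0) * cross (Y-X) (X'-X) = 0" using m1 m2 ge ceq by linarith
  hence z1: "cross (Y-X) (X'-X) = 0" using t0 by simp
  have "t0 * cross (Y-X) (Y'-X) = 0" using m1 m2 ge ceq by linarith
  hence z2: "cross (Y-X) (Y'-X) = 0" using t0 by simp
  have vv: "on_ellipse a b X" "on_ellipse a b Y" "X \<noteq> Y" using v by (auto simp: valid_def)
  have X': "X' = X \<or> X' = Y" using on_line_E[OF vv ab _ z1] v' by (simp add: valid_def)
  have Y': "Y' = X \<or> Y' = Y" using on_line_E[OF vv ab _ z2] v' by (simp add: valid_def)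
  have o1: "cross (Y - X) (0 - X) > 0" using v by (simp add: valid_def)
  have o2: "cross (Y' - X') (0 - X') > 0" using v' by (simp add: valid_def)
  show ?thesis
  proof (cases "X' = Y \<and> Y' = X")
    case True
    with o1 o2 show ?thesis by (simp add: cross_def algebra_simps)
  next
    case False
    with X' Y' v' show ?thesis by (auto simp: valid_def)
  qed
qed

lemma next_unique:
  assumes pos: "0 < A" "A < a" "0 < B" "B < b"
  and v: "valid a b A B X Y" and v': "valid a b A B X Y'"
  shows "Y' = Y"
proof (cases "cross (Y - X) (Y' - X) \<le> 0")
  case True
  thus ?thesis using no_nest[OF pos v v'] by (simp add: cross_def)
next
  case False
  hence "cross (Y' - X) (Y - X) \<le> 0" by (simp add: cross_def algebra_simps)
  thus ?thesis using no_nest[OF pos v' v] by (simp add: cross_def)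
qed



definition Em :: "real \<Rightarrow> real \<Rightarrow> real \<Rightarrow> pt" where
  "Em a b t = (a * cos t, b * sin t)"

lemma cross_Em: "cross (Em a b s - Em a b t) (Em a b u - Em a b t)
   = a*b*(sin(s-t) + sin(u-s) + sin(t-u))"
  by (simp add: Em_def cross_def sin_diff algebra_simps)

lemma sin_triple_aux: fixes x y :: real shows "sin (2*x) + sin (2*y) - sin (2*x+2*y) = 4 * sin x * sin y * sin (x+y)"
proof -
  have c2: "cos (2*x) = 1 - 2*(sin x)^2" "cos (2*y) = 1 - 2*(sin y)^2" by (simp_all add: cos_double_sin)
  have "sin (2*x+2*y) = sin (2*x) * cos (2*y) + cos (2*x) * sin(2*y)" by (simp add: sin_add)
  also have "\<dots> = (2 * sin x * cos x)*(1 - 2*(sin y)^2) + (1 - 2*(sin x)^2)*(2 * sin y * cos y)"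
    by (simp only: c2 sin_double)
  finally have e: "sin (2*x+2*y) = (2 * sin x * cos x)*(1 - 2*(sin y)^2) + (1 - 2*(sin x)^2)*(2 * sin y * cos y)" .
  have sa: "sin(x+y) = sin x * cos y + cos x * sin y" by (rule sin_add)
  show ?thesis unfolding e sa sin_double by (simp add: algebra_simps power2_eq_square)
qed

lemma sin_triple: fixes s t u :: real shows "sin(s-t) + sin(u-s) + sin(t-u) = - 4 * sin((s-t)/2) * sin((u-s)/2) * sin((t-u)/2)"
proof -
  define x where "x = (s-t)/2"
  define y where "y = (u-s)/2"
  have e: "s - t = 2*x" "u - s = 2*y" "t - u = -(2*x+2*y)" "(s-t)/2 = x" "(u-s)/2 = y" "(t-u)/2 = -(x+y)"
    by (simp_all add: x_def y_def field_simps)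
  have f: "sin(s-t) = sin(2*x)" "sin(u-s) = sin(2*y)" "sin(t-u) = - sin(2*x+2*y)"
     "sin((s-t)/2) = sin x" "sin((u-s)/2) = sin y" "sin((t-u)/2) = - sin(x+y)"
  proof -
    have g: "2*x = s-t" "2*y = u-s" "2*x+2*y = u-t" "(t-u)/2 = -(x+y)" "t - u = -(u-t)"
      by (simp_all add: x_def y_def field_simps)
    show "sin(s-t) = sin(2*x)" "sin(u-s) = sin(2*y)" by (simp_all only: g)
    show "sin((s-t)/2) = sin x" "sin((u-s)/2) = sin y"
      by (simp_all add: x_def y_def)
    show "sin(t-u) = - sin(2*x+2*y)" by (subst g(3)) (simp only: g(5) sin_minus)
    show "sin((t-u)/2) = - sin(x+y)" by (subst g(4)) (simp only: sin_minus)
  qed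
  show ?thesis unfolding f using sin_triple_aux[of x y] by simp
qed

lemma cross_Em_closed:
  assumes "a > 0" "b > 0" "s \<le> u" "u \<le> s'" "s' < s + 2*pi"
  shows "cross (Em a b s' - Em a b s) (Em a b u - Em a b s) \<le> 0"
proof -
  have h1: "sin ((s'-s)/2) \<ge> 0" using assms by (intro sin_ge_zero) auto
  have h2: "sin ((s'-u)/2) \<ge> 0" using assms by (intro sin_ge_zero) auto
  have h3: "sin ((u-s)/2) \<ge> 0" using assms by (intro sin_ge_zero) auto
  have q: "(u-s')/2 = -((s'-u)/2)" "(s-u)/2 = -((u-s)/2)" by (simp_all add: field_simps)
  have e: "sin ((u-s')/2) = - sin ((s'-u)/2)" "sin ((s-u)/2) = - sin ((u-s)/2)"
    by (simp_all only: q sin_minus)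
  have "cross (Em a b s' - Em a b s) (Em a b u - Em a b s)
     = - 4 * (a*b) * (sin ((s'-s)/2) * sin ((s'-u)/2) * sin ((u-s)/2))"
    unfolding cross_Em sin_triple e by (simp add: algebra_simps)
  moreover have "sin ((s'-s)/2) * sin ((s'-u)/2) * sin ((u-s)/2) \<ge> 0" using h1 h2 h3 by simp
  moreover have "a*b > 0" using assms by simp
  ultimately show ?thesis by (simp add: mult_nonneg_nonneg)
qed

lemma cross_Em_strict:
  assumes "a > 0" "b > 0" "t < u" "u < s" "s < t + 2*pi"
  shows "cross (Em a b s - Em a b t) (Em a b u - Em a b t) < 0"
proof -
  have h1: "sin ((s-t)/2) > 0" using assms by (intro sin_gt_zero) auto
  have h2: "sin ((s-u)/2) > 0" using assms by (intro sin_gt_zero) auto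
  have h3: "sin ((u-t)/2) > 0" using assms by (intro sin_gt_zero) auto
  have q: "(u-s)/2 = -((s-u)/2)" "(t-u)/2 = -((u-t)/2)" by (simp_all add: field_simps)
  have e: "sin ((u-s)/2) = - sin ((s-u)/2)" "sin ((t-u)/2) = - sin ((u-t)/2)"
    by (simp_all only: q sin_minus)
  have "cross (Em a b s - Em a b t) (Em a b u - Em a b t)
     = - 4 * (a*b) * (sin ((s-t)/2) * sin ((s-u)/2) * sin ((u-t)/2))"
    unfolding cross_Em sin_triple e by (simp add: algebra_simps)
  moreover have "sin ((s-t)/2) * sin ((s-u)/2) * sin ((u-t)/2) > 0" using h1 h2 h3 by simp
  moreover have "a*b > 0" using assms by simp
  ultimately show ?thesis by (simp add: mult_pos_pos)
qed

lemma Em_inj: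
  assumes "a > 0" "b > 0" "s \<le> u" "u < s + 2*pi" "Em a b u = Em a b s"
  shows "u = s"
proof -
  have c: "cos u = cos s" "sin u = sin s" using assms by (auto simp: Em_def)
  have "cos (u - s) = 1" by (simp add: cos_diff c)
  hence "\<exists>n::int. u - s = of_int n * 2 * pi" by (rule cos_one_2pi_int[THEN iffD1])
  then obtain n :: int where n: "u - s = of_int n * 2 * pi" by blast
  have p: "2*pi > 0" by simp
  have "real_of_int n * (2*pi) \<ge> 0" using n assms(3) by (simp only: mult.assoc[symmetric])
  hence "real_of_int n \<ge> 0" using p by (simp add: zero_le_mult_iff)
  moreover have "real_of_int n * (2*pi) < 1 * (2*pi)" using n assms(4) by (simp only: mult.assoc[symmetric])
  hence "real_of_int n < 1" by (rule mult_right_less_imp_less) simp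
  ultimately have "n = 0" by linarith
  thus ?thesis using n by simp
qed

lemma Em_pi: "Em a b (t + pi) = - Em a b t"
  by (simp add: Em_def)

lemma on_ellipse_Em: "a \<noteq> 0 \<Longrightarrow> b \<noteq> 0 \<Longrightarrow> on_ellipse a b (Em a b t)"
  by (simp add: Em_def on_ellipse_def power_mult_distrib)

lemma Em_exists:
  assumes "a > 0" "b > 0" "on_ellipse a b X"
  obtains t where "0 \<le> t" "t < 2*pi" "X = Em a b t"
proof -
  have "(fst X / a)^2 + (snd X / b)^2 = 1" using assms by (simp add: on_ellipse_def power_divide)
  then obtain t where "0 \<le> t" "t < 2*pi" "fst X / a = cos t" "snd X / b = sin t"
    by (rule sincos_total_2pi)
  moreover hence "X = Em a b t" using assms by (simp add: Em_def prod_eq_iff field_simps)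
  ultimately show ?thesis using that by blast
qed

definition rot :: "real \<Rightarrow> real \<Rightarrow> real \<Rightarrow> pt \<Rightarrow> pt" where
  "rot a b d X = (a*((fst X/a)*cos d - (snd X/b)* sin d), b*((snd X/b)*cos d + (fst X/a)* sin d))"

lemma rot_Em: "a \<noteq> 0 \<Longrightarrow> b \<noteq> 0 \<Longrightarrow> rot a b d (Em a b t) = Em a b (t + d)"
  by (simp add: rot_def Em_def cos_add sin_add algebra_simps)

lemma step_angle:
  assumes "a > 0" "b > 0" "on_ellipse a b X" "on_ellipse a b Y" "cross (Y - X) (0 - X) > 0"
  shows "\<exists>d. 0 < d \<and> d < pi \<and> rot a b d X = Y"
proof -
  obtain t where t: "0 \<le> t" "t < 2*pi" "X = Em a b t" using Em_exists[OF assms(1,2,3)] by blast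
  obtain t' where t': "0 \<le> t'" "t' < 2*pi" "Y = Em a b t'" using Em_exists[OF assms(1,2,4)] by blast
  have "cross (Y - X) (0 - X) = a*b* sin(t'-t)" by (simp add: t t' Em_def cross_def sin_diff algebra_simps)
  hence s: "sin (t'-t) > 0" using assms mult_pos_pos[OF assms(1,2)] by (auto simp: zero_less_mult_iff)
  define d where "d = (if t \<le> t' then t'-t else t'-t+2*pi)"
  have sd: "sin d = sin (t'-t)" by (simp add: d_def)
  have cd: "Em a b (t + d) = Em a b t'" by (simp add: d_def Em_def)
  have d0: "0 \<le> d" "d < 2*pi" using t t' by (auto simp: d_def)
  have "d \<noteq> 0" using s sd by auto
  moreover have "d < pi"
  proof (rule ccontr)
    assume "\<not> d < pi"
    hence "sin d \<le> 0" using d0 by (intro sin_le_zero) auto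
    thus False using s sd by simp
  qed
  moreover have "rot a b d X = Y" using cd rot_Em[of a b d t] assms(1,2) t(3) t'(3) by simp
  ultimately show ?thesis using d0 by (intro exI[of _ d]) simp
qed



lemma find_interval:
  fixes \<tau> :: "nat \<Rightarrow> real"
  assumes mono: "\<And>i. \<tau> i < \<tau> (Suc i)" and "m \<le> n" "\<tau> m \<le> x" "x < \<tau> n"
  shows "\<exists>k. m \<le> k \<and> k < n \<and> \<tau> k \<le> x \<and> x < \<tau> (Suc k)"
  using assms(2-4)
proof (induction n)
  case 0
  thus ?case by simp
next
  case (Suc n)
  show ?case
  proof (cases "x < \<tau> n")
    case True
    have "m \<noteq> Suc n" using Suc.prems by auto
    hence "m \<le> n" using Suc.prems by simp
    then obtain k where "m \<le> k \<and> k < n \<and> \<tau> k \<le> x \<and> x < \<tau> (Suc k)" using Suc.IH True Suc.prems by blast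
    thus ?thesis by (intro exI[of _ k]) auto
  next
    case False
    have "m \<noteq> Suc n" using Suc.prems by auto
    hence "m \<le> n" using Suc.prems by simp
    thus ?thesis using False Suc.prems by (intro exI[of _ n]) auto
  qed
qed

lemma interleave:
  fixes \<tau> :: "nat \<Rightarrow> real" and V :: "real \<Rightarrow> real \<Rightarrow> bool"
  assumes mono: "\<And>i. \<tau> i < \<tau> (Suc i)" and step: "\<And>i. \<tau> (Suc i) < \<tau> i + pi"
    and per: "\<And>i. \<tau> (i + N) = \<tau> i + 2*pi" and ev: "even N"
    and nn: "\<And>s s' u u'. s \<le> u \<Longrightarrow> u < u' \<Longrightarrow> u' \<le> s' \<Longrightarrow> s' < s + 2*pi \<Longrightarrow> V s s' \<Longrightarrow> V u u' \<Longrightarrow> u = s"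
    and V1: "\<And>i. V (\<tau> i) (\<tau> (Suc i))" and V2: "\<And>i. V (\<tau> i + pi) (\<tau> (Suc i) + pi)"
  shows "\<exists>k. \<tau> 0 + pi = \<tau> k"
proof (rule ccontr)
  assume ne: "\<not> ?thesis"
  define \<sigma> where "\<sigma> j = \<tau> j + pi" for j
  have tN: "\<tau> N = \<tau> 0 + 2*pi" using per[of 0] by simp
  have "\<exists>k. 0 \<le> k \<and> k < N \<and> \<tau> k \<le> \<sigma> 0 \<and> \<sigma> 0 < \<tau> (Suc k)"
    by (rule find_interval[of \<tau>, OF mono]) (use tN in \<open>auto simp: \<sigma>_def\<close>)
  then obtain k where k: "\<tau> k \<le> \<sigma> 0" "\<sigma> 0 < \<tau> (Suc k)" by blast
  have k1: "\<tau> k < \<sigma> 0" using k(1) ne by (metis \<sigma>_def order_le_less)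
  have claim: "\<tau> (k+j) < \<sigma> j \<and> \<sigma> j < \<tau> (Suc (k+j))" for j
  proof (induction j)
    case 0
    thus ?case using k1 k(2) by simp
  next
    case (Suc j)
    have A1: "\<tau> (Suc (k+j)) < \<sigma> (Suc j)"
    proof (rule ccontr)
      assume "\<not> ?thesis"
      hence le: "\<sigma> (Suc j) \<le> \<tau> (Suc (k+j))" by simp
      have "\<sigma> j = \<tau> (k+j)"
        by (rule nn[OF _ _ le]) (use Suc.IH mono[of j] step[of "k+j"] V1[of "k+j"] V2[of j] in \<open>auto simp: \<sigma>_def\<close>)
      thus False using Suc.IH by simp
    qed
    have A2: "\<sigma> (Suc j) < \<tau> (Suc (Suc (k+j)))"
    proof (rule ccontr)
      assume "\<not> ?thesis"
      hence le: "\<tau> (Suc (Suc (k+j))) \<le> \<sigma> (Suc j)" by simp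
      have st2: "\<tau> (Suc j) < \<tau> j + 2*pi" using step[of j] pi_gt_zero by linarith
      have "\<tau> (Suc (k+j)) = \<sigma> j"
        by (rule nn[OF _ _ le]) (use Suc.IH mono[of "Suc (k+j)"] step[of j] V1[of "Suc (k+j)"] V2[of j] st2 in \<open>auto simp: \<sigma>_def\<close>)
      thus False using Suc.IH by simp
    qed
    show ?case using A1 A2 by simp
  qed
  have c1: "\<tau> (k+k) < \<tau> N" using claim[of k] k(1) tN by (simp add: \<sigma>_def)
  have c2: "\<tau> N < \<tau> (Suc (k + Suc k))" using claim[of "Suc k"] k(2) tN by (simp add: \<sigma>_def)
  have "k + k < N" using c1 lift_Suc_mono_less_iff[of \<tau>, OF mono] by blast
  moreover have "N < Suc (k + Suc k)" using c2 lift_Suc_mono_less_iff[of \<tau>, OF mono] by blast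
  ultimately have "N = Suc (k + k)" by simp
  thus False using ev by simp
qed

lemma winding_one:
  fixes \<tau> :: "nat \<Rightarrow> real" and n :: int
  assumes mono: "\<And>i. \<tau> i < \<tau> (Suc i)" and step: "\<And>i. \<tau> (Suc i) < \<tau> i + pi"
    and N: "N \<ge> 3" and D: "\<tau> N = \<tau> 0 + real_of_int n * 2 * pi" and n: "n \<ge> 2"
    and eq: "\<And>i j. i < N \<Longrightarrow> j < N \<Longrightarrow> i \<noteq> j \<Longrightarrow> \<tau> j = \<tau> i + 2*pi \<Longrightarrow> False"
    and str: "\<And>i j. i < N \<Longrightarrow> j < N \<Longrightarrow> j \<noteq> i \<Longrightarrow> j \<noteq> Suc i mod N \<Longrightarrow>
        \<tau> i < \<tau> j + 2*pi \<Longrightarrow> \<tau> j + 2*pi < \<tau> (Suc i) \<Longrightarrow> False"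
  shows False
proof -
  have "real_of_int n * 2 * pi \<ge> 2 * 2 * pi" using n by (intro mult_right_mono) auto
  moreover have "\<tau> 1 < \<tau> 0 + pi" using step[of 0] by simp
  ultimately have big: "\<tau> 1 + 2*pi < \<tau> N" using D pi_gt_zero by linarith
  have "\<exists>k. 1 \<le> k \<and> k < N \<and> \<tau> k \<le> \<tau> 1 + 2*pi \<and> \<tau> 1 + 2*pi < \<tau> (Suc k)"
    by (rule find_interval[of \<tau>, OF mono]) (use big N in auto)
  then obtain k where k: "1 \<le> k" "k < N" "\<tau> k \<le> \<tau> 1 + 2*pi" "\<tau> 1 + 2*pi < \<tau> (Suc k)" by blast
  show False
  proof (cases "\<tau> k = \<tau> 1 + 2*pi")
    case True
    moreover have "k \<noteq> 1" using True by auto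
    ultimately show False using eq[of 1 k] k N by auto
  next
    case False
    hence lt: "\<tau> k < \<tau> 1 + 2*pi" using k by simp
    have "\<tau> 2 < \<tau> 1 + 2*pi" using step[of 1] pi_gt_zero unfolding numeral_2_eq_2 One_nat_def by linarith
    hence "k \<noteq> 1" using lt k(4) by (auto simp: numeral_2_eq_2)
    moreover have "1 \<noteq> Suc k mod N"
    proof (cases "Suc k < N")
      case True thus ?thesis using k by simp
    next
      case False hence "Suc k = N" using k by simp
      thus ?thesis using N by simp
    qed
    ultimately show False using str[of k 1] k N lt by auto
  qed
qed



lemma sum_shift_mod:
  fixes f :: "nat \<Rightarrow> real"
  assumes "N > 0"
  shows "(\<Sum>i<N. f ((i + k) mod N)) = (\<Sum>i<N. f i)"
proof -
  let ?h = "\<lambda>i. (i + k) mod N"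
  have inj: "inj_on ?h {..<N}"
  proof (rule inj_onI)
    have aux: "i = j" if "i < N" "j < N" "i \<le> j" "(i + k) mod N = (j + k) mod N" for i j
    proof -
      have "N dvd (j + k) - (i + k)" using that mod_eq_dvd_iff_nat[of "i+k" "j+k" N] by simp
      hence "N dvd j - i" by simp
      moreover have "j - i < N" using that by simp
      ultimately have "j - i = 0" using nat_dvd_not_less by (metis neq0_conv)
      thus ?thesis using that by simp
    qed
    fix i j assume "i \<in> {..<N}" "j \<in> {..<N}" "(i + k) mod N = (j + k) mod N"
    thus "i = j" using aux[of i j] aux[of j i] by (cases "i \<le> j") auto
  qed
  have sub: "?h ` {..<N} \<subseteq> {..<N}" using assms by auto
  have img: "?h ` {..<N} = {..<N}" using endo_inj_surj[OF _ sub inj] by simp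
  have "(\<Sum>i<N. f i) = (\<Sum>i\<in>?h ` {..<N}. f i)" using img by simp
  also have "\<dots> = (\<Sum>i<N. f (?h i))" using sum.reindex[OF inj] by simp
  finally show ?thesis by simp
qed

lemma foot_neg: "foot F (- X) (- Y) = - foot (- F) X Y"
  by (simp add: foot_def pdot_def algebra_simps)

lemma area_sym:
  fixes P :: "nat \<Rightarrow> pt" and F :: pt
  assumes N: "N > 0" and sym: "\<And>i. P ((i + k) mod N) = - P (i mod N)"
  shows "signed_area N (\<lambda>i. foot F (P i) (P (Suc i mod N)))
       = signed_area N (\<lambda>i. foot (- F) (P i) (P (Suc i mod N)))"
proof -
  define W1 where "W1 i = foot F (P i) (P (Suc i mod N))" for i
  define W2 where "W2 i = foot (- F) (P i) (P (Suc i mod N))" for i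
  have sP: "P (Suc ((i + k) mod N) mod N) = - P (Suc (i mod N) mod N)" for i
  proof -
    have "P (Suc ((i + k) mod N) mod N) = P ((Suc i + k) mod N)" by (simp add: mod_Suc_eq)
    also have "\<dots> = - P (Suc i mod N)" using sym[of "Suc i"] by (simp add: mod_Suc_eq)
    finally show ?thesis by (simp add: mod_Suc_eq)
  qed
  have s1: "W1 ((i + k) mod N) = - W2 (i mod N)" for i
    unfolding W1_def W2_def sym sP foot_neg by simp
  have s2: "W2 ((i + k) mod N) = - W1 (i mod N)" for i
    unfolding W1_def W2_def sym sP foot_neg by simp
  define g where "g i = (fst (W1 i) * snd (W1 (Suc i mod N)) - fst (W1 (Suc i mod N)) * snd (W1 i))
     - (fst (W2 i) * snd (W2 (Suc i mod N)) - fst (W2 (Suc i mod N)) * snd (W2 i))" for i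
  have Sk: "Suc ((i + k) mod N) mod N = (Suc i + k) mod N" for i by (simp add: mod_Suc_eq)
  have Si: "Suc (i mod N) mod N = Suc i mod N" for i by (simp add: mod_Suc_eq)
  have a1: "W1 (Suc ((i + k) mod N) mod N) = - W2 (Suc (i mod N) mod N)" for i
    using s1[of "Suc i"] Sk[of i] Si[of i] by simp
  have a2: "W2 (Suc ((i + k) mod N) mod N) = - W1 (Suc (i mod N) mod N)" for i
    using s2[of "Suc i"] Sk[of i] Si[of i] by simp
  have gs: "g ((i + k) mod N) = - g (i mod N)" for i
    unfolding g_def a1 a2 s1 s2 by (simp add: algebra_simps)
  have "(\<Sum>i<N. g i) = (\<Sum>i<N. g ((i + k) mod N))" using sum_shift_mod[OF N] by simp
  also have "\<dots> = (\<Sum>i<N. - g i)" using gs by (intro sum.cong) auto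
  also have "\<dots> = - (\<Sum>i<N. g i)" by (simp add: sum_negf)
  finally have z: "(\<Sum>i<N. g i) = 0" by simp
  have "signed_area N W1 - signed_area N W2 = (1/2) * (\<Sum>i<N. g i)"
    unfolding signed_area_def g_def by (simp only: sum_subtractf right_diff_distrib)
  thus ?thesis using z unfolding W1_def W2_def by simp
qed


lemma on_ellipse_neg: "on_ellipse A B (- Z) \<longleftrightarrow> on_ellipse A B Z"
  by (simp add: on_ellipse_def)

lemma tangent_neg:
  assumes "line_tangent_to_ellipse X Y A B"
  shows "line_tangent_to_ellipse (-X) (-Y) A B"
proof -
  obtain T where T: "on_ellipse A B T \<and> (\<exists>t. T = X + t *\<^sub>R (Y - X))"
    and u: "\<And>Z. on_ellipse A B Z \<and> (\<exists>t. Z = X + t *\<^sub>R (Y - X)) \<Longrightarrow> Z = T"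
    using assms unfolding line_tangent_to_ellipse_def by blast
  show ?thesis unfolding line_tangent_to_ellipse_def
  proof (rule ex1I[of _ "-T"])
    obtain t where t: "T = X + t *\<^sub>R (Y - X)" using T by blast
    have "- T = - X + t *\<^sub>R (- Y - - X)" by (simp add: t algebra_simps)
    thus "on_ellipse A B (- T) \<and> (\<exists>t. - T = - X + t *\<^sub>R (- Y - - X))"
      using T on_ellipse_neg by blast
  next
    fix Z assume Z: "on_ellipse A B Z \<and> (\<exists>t. Z = - X + t *\<^sub>R (- Y - - X))"
    then obtain t where t: "Z = - X + t *\<^sub>R (- Y - - X)" by blast
    have "- Z = X + t *\<^sub>R (Y - X)" by (simp add: t algebra_simps)
    hence "- Z = T" using u Z on_ellipse_neg by blast
    thus "Z = - T" by (metis minus_minus)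
  qed
qed

lemma valid_neg: "valid a b A B X Y \<Longrightarrow> valid a b A B (-X) (-Y)"
  unfolding valid_def using tangent_neg[of X Y A B]
  by (auto simp: on_ellipse_neg cross_def algebra_simps)

lemma caustic_small:
  assumes ab: "a > 0" "b > 0" and AB: "A > 0" "B > 0" "A^2 - B^2 = a^2 - b^2"
    and XY: "on_ellipse a b X" "on_ellipse a b Y" "X \<noteq> Y" and tg: "line_tangent_to_ellipse X Y A B"
  shows "A < a"
proof (rule ccontr)
  assume "\<not> A < a"
  hence "A = a \<or> A > a" by linarith
  thus False
  proof
    assume Aa: "A = a"
    hence "B^2 = b^2" using AB by simp
    hence "B = b" using AB ab by (simp add: power2_eq_iff_nonneg)
    hence "on_ellipse A B X" "on_ellipse A B Y" using XY Aa by simp_all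
    moreover have "X = X + 0 *\<^sub>R (Y - X)" "Y = X + 1 *\<^sub>R (Y - X)" by simp_all
    ultimately have "X = Y" using tg unfolding line_tangent_to_ellipse_def by blast
    thus False using XY by simp
  next
    assume Aa: "A > a"
    hence "a^2 < A^2" using ab by (simp add: power_strict_mono)
    hence "B^2 > b^2" using AB by linarith
    hence Bb: "B > b" using AB ab by (simp add: power_less_imp_less_base)
    have "QC A B X < 1" using inside_E[OF ab(1) Aa ab(2) Bb XY(1)] .
    moreover have "X = X + 0 *\<^sub>R (Y - X)" by simp
    ultimately have "\<not> line_tangent_to_ellipse X Y A B"
      using two_points_not_tangent[OF XY(3) AB(1,2)] by blast
    thus False using tg by simp
  qed
qed


lemma nn_angle:
  assumes pos: "0 < A" "A < a" "0 < B" "B < b"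
    and o: "s \<le> u" "u < u'" "u' \<le> s'" "s' < s + 2*pi"
    and v: "valid a b A B (Em a b s) (Em a b s')" and v': "valid a b A B (Em a b u) (Em a b u')"
  shows "u = s"
proof -
  have ab: "a > 0" "b > 0" using pos by auto
  have c1: "cross (Em a b s' - Em a b s) (Em a b u - Em a b s) \<le> 0"
    using o by (intro cross_Em_closed[OF ab]) auto
  have c2: "cross (Em a b s' - Em a b s) (Em a b u' - Em a b s) \<le> 0"
    using o by (intro cross_Em_closed[OF ab]) auto
  have "Em a b u = Em a b s" using no_nest[OF pos v v' c1 c2] by simp
  thus ?thesis using Em_inj[OF ab] o by auto
qed

theorem mainTheorem2:
  fixes a b :: real and N :: nat and P :: "nat \<Rightarrow> pt"
  assumes "a > b" and "b > 0"
    and "N \<ge> 4" and "even N"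
    and "billiard_traj a b N P"
  shows "signed_area N (\<lambda>i. foot (focus1 a b) (P i) (P (Suc i mod N)))
       = signed_area N (\<lambda>i. foot (focus2 a b) (P i) (P (Suc i mod N)))"
proof -
  have ab: "a > 0" "b > 0" using assms(1,2) by auto
  have Npos: "N > 0" using assms(3) by simp
  note bt = assms(5)[unfolded billiard_traj_def]
  have N3: "N \<ge> 3" using bt by blast
  have onE: "\<And>i. i < N \<Longrightarrow> on_ellipse a b (P i)" using bt by blast
  have dstep: "\<And>i. i < N \<Longrightarrow> P i \<noteq> P (Suc i mod N)" using bt by blast
  have conv: "\<And>i j. i < N \<Longrightarrow> j < N \<Longrightarrow> j \<noteq> i \<Longrightarrow> j \<noteq> Suc i mod N \<Longrightarrow>
      cross (P (Suc i mod N) - P i) (P j - P i) > 0" using bt by blast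
  have oleft: "\<And>i. i < N \<Longrightarrow> cross (P (Suc i mod N) - P i) (0 - P i) > 0" using bt by blast
  obtain A B where conf: "confocal_ellipse a b A B"
    and tg: "\<And>i. i < N \<Longrightarrow> line_tangent_to_ellipse (P i) (P (Suc i mod N)) A B"
    using bt by blast
  have AB: "A > 0" "B > 0" "A^2 - B^2 = a^2 - b^2" using conf by (auto simp: confocal_ellipse_def)
  have Si: "\<And>i. Suc (i mod N) mod N = Suc i mod N" by (simp add: mod_Suc_eq)
  have Aa: "A < a"
    using caustic_small[OF ab AB onE[of 0] onE[of "Suc 0 mod N"] dstep[of 0] tg[of 0]] Npos by simp
  have "A^2 < a^2" using Aa AB by (simp add: power_strict_mono)
  hence "B^2 < b^2" using AB by linarith
  hence Bb: "B < b" using ab AB by (simp add: power_less_imp_less_base)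
  have pos: "0 < A" "A < a" "0 < B" "B < b" using AB Aa Bb by auto
  have val: "\<And>i. i < N \<Longrightarrow> valid a b A B (P i) (P (Suc i mod N))"
    unfolding valid_def using onE dstep tg oleft Npos by auto
  have valm: "valid a b A B (P (i mod N)) (P (Suc i mod N))" for i
    using val[of "i mod N"] Npos Si by simp
  have distinct: "P i \<noteq> P j" if "i < N" "j < N" "i \<noteq> j" for i j
  proof (cases "j = Suc i mod N")
    case True thus ?thesis using dstep that by simp
  next
    case False
    hence "cross (P (Suc i mod N) - P i) (P j - P i) > 0" using conv that by auto
    thus ?thesis by (auto simp: cross_def)
  qed
  define dl where "dl i = (SOME d. 0 < d \<and> d < pi \<and> rot a b d (P (i mod N)) = P (Suc i mod N))" for i
  have dl: "0 < dl i \<and> dl i < pi \<and> rot a b (dl i) (P (i mod N)) = P (Suc i mod N)" for i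
  proof -
    have "\<exists>d. 0 < d \<and> d < pi \<and> rot a b d (P (i mod N)) = P (Suc i mod N)"
      using step_angle[OF ab] valm[of i] unfolding valid_def by blast
    thus ?thesis unfolding dl_def by (rule someI_ex)
  qed
  obtain t0 where t0: "P 0 = Em a b t0" using Em_exists[OF ab onE[OF Npos]] by metis
  define \<tau> where "\<tau> i = t0 + (\<Sum>j<i. dl j)" for i
  have \<tau>S: "\<tau> (Suc i) = \<tau> i + dl i" for i by (simp add: \<tau>_def)
  have Em\<tau>: "Em a b (\<tau> i) = P (i mod N)" for i
  proof (induction i)
    case 0 thus ?case using t0 by (simp add: \<tau>_def)
  next
    case (Suc i)
    have "Em a b (\<tau> (Suc i)) = rot a b (dl i) (Em a b (\<tau> i))" using rot_Em ab by (simp add: \<tau>S)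
    also have "\<dots> = P (Suc i mod N)" using Suc.IH dl[of i] by simp
    finally show ?case .
  qed
  have mono: "\<tau> i < \<tau> (Suc i)" for i using dl[of i] \<tau>S[of i] by simp
  have step: "\<tau> (Suc i) < \<tau> i + pi" for i using dl[of i] \<tau>S[of i] by simp
  have dlper: "dl (i + N) = dl i" for i
  proof -
    have "Suc (i + N) mod N = Suc i mod N" by (metis add_Suc mod_add_self2)
    thus ?thesis by (simp add: dl_def)
  qed
  have per0: "\<tau> (i + N) = \<tau> i + (\<tau> N - \<tau> 0)" for i
  proof (induction i)
    case 0 thus ?case by simp
  next
    case (Suc i)
    have "\<tau> (Suc i + N) = \<tau> (Suc (i + N))" by simp
    also have "\<dots> = \<tau> (i + N) + dl i" using \<tau>S[of "i + N"] dlper[of i] by simp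
    finally show ?case using Suc.IH \<tau>S[of i] by simp
  qed
  have D: "\<tau> N - \<tau> 0 = 2*pi"
  proof -
    have e: "Em a b (\<tau> N) = Em a b (\<tau> 0)" using Em\<tau>[of N] Em\<tau>[of 0] by simp
    hence c: "cos (\<tau> N) = cos (\<tau> 0)" "sin (\<tau> N) = sin (\<tau> 0)" using ab by (auto simp: Em_def)
    have "cos (\<tau> N - \<tau> 0) = 1" by (simp add: cos_diff c)
    hence "\<exists>n::int. \<tau> N - \<tau> 0 = of_int n * 2 * pi" by (rule cos_one_2pi_int[THEN iffD1])
    then obtain n :: int where n: "\<tau> N - \<tau> 0 = of_int n * 2 * pi" by blast
    have "\<tau> 0 < \<tau> N" using lift_Suc_mono_less[of \<tau>, OF mono Npos] .
    hence "real_of_int n * (2*pi) > 0" using n by (simp only: mult.assoc[symmetric])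
    hence "real_of_int n > 0" by (simp add: zero_less_mult_iff)
    hence n1: "n \<ge> 1" by simp
    have "\<not> n \<ge> 2"
    proof
      assume n2: "n \<ge> 2"
      show False
      proof (rule winding_one[of \<tau> N n, OF mono step N3 _ n2])
        show "\<tau> N = \<tau> 0 + real_of_int n * 2 * pi" using n by simp
      next
        fix i j assume ij: "i < N" "j < N" "i \<noteq> j" "\<tau> j = \<tau> i + 2*pi"
        have "Em a b (\<tau> j) = Em a b (\<tau> i)" using ij(4) by (simp add: Em_def)
        hence "P j = P i" using Em\<tau>[of i] Em\<tau>[of j] ij by simp
        thus False using distinct[of j i] ij by simp
      next
        fix i j assume ij: "i < N" "j < N" "j \<noteq> i" "j \<noteq> Suc i mod N"
          "\<tau> i < \<tau> j + 2*pi" "\<tau> j + 2*pi < \<tau> (Suc i)"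
        have "\<tau> (Suc i) < \<tau> i + 2*pi" using step[of i] pi_gt_zero by linarith
        hence "cross (Em a b (\<tau> (Suc i)) - Em a b (\<tau> i)) (Em a b (\<tau> j + 2*pi) - Em a b (\<tau> i)) < 0"
          using ij by (intro cross_Em_strict[OF ab]) auto
        moreover have "Em a b (\<tau> j + 2*pi) = P j" using Em\<tau>[of j] ij by (simp add: Em_def)
        ultimately have "cross (P (Suc i mod N) - P i) (P j - P i) < 0" using Em\<tau>[of i] Em\<tau>[of "Suc i"] ij by simp
        thus False using conv[OF ij(1-4)] by simp
      qed
    qed
    hence "n = 1" using n1 by simp
    thus ?thesis using n by simp
  qed
  have per: "\<tau> (i + N) = \<tau> i + 2*pi" for i using per0[of i] D by simp
  define V where "V s s' = valid a b A B (Em a b s) (Em a b s')" for s s'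
  have "\<exists>k. \<tau> 0 + pi = \<tau> k"
  proof (rule interleave[of \<tau> N V, OF mono step per assms(4)])
    fix s s' u u' assume "s \<le> u" "u < u'" "u' \<le> s'" "s' < s + 2*pi" "V s s'" "V u u'"
    thus "u = s" using nn_angle[OF pos] unfolding V_def by blast
  next
    fix i show "V (\<tau> i) (\<tau> (Suc i))" unfolding V_def Em\<tau> using valm[of i] by simp
  next
    fix i show "V (\<tau> i + pi) (\<tau> (Suc i) + pi)" unfolding V_def Em_pi Em\<tau> using valid_neg[OF valm[of i]] by simp
  qed
  then obtain k where k: "\<tau> 0 + pi = \<tau> k" by blast
  define k' where "k' = k mod N"
  have Pk: "P k' = - P 0" using Em\<tau>[of k] Em\<tau>[of 0] Em_pi[of a b "\<tau> 0"] k Npos by (simp add: k'_def)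
  have sym: "P ((i + k') mod N) = - P (i mod N)" for i
  proof (induction i)
    case 0 thus ?case using Pk by (simp add: k'_def)
  next
    case (Suc i)
    have v1: "valid a b A B (P ((i + k') mod N)) (P (Suc (i + k') mod N))" using valm[of "i + k'"] .
    have v2: "valid a b A B (P ((i + k') mod N)) (- P (Suc i mod N))"
      using valid_neg[OF valm[of i]] Suc.IH by simp
    have "- P (Suc i mod N) = P (Suc (i + k') mod N)" using next_unique[OF pos v1 v2] .
    thus ?case by simp
  qed
  have f2: "focus2 a b = - focus1 a b" by (simp add: focus1_def focus2_def)
  show ?thesis unfolding f2 using area_sym[OF Npos sym] .
qed

end
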